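(* Let $\mathbf M$ be an $(N+1,k)$-admissible and micro-reversible matrix, with $Q$-process kernel $\mathbf K$ and stationary measure $\boldsymbol\pi$ (indices $i=0,\dots,N-k$). Let $\phi:\mathbb R^+\to\mathbb R$ be differentiable and convex, let $G_\phi(\mathbf Q|\boldsymbol\pi):=\sum_{i=0}^{N-k}\phi(Q_i)\pi_i$, and let $\mathbf Q(t)=\mathbf q(t)/\boldsymbol\pi$, with $\mathbf q(t)$ a probability vector, solve $\frac{d\mathbf Q}{dt}=(\mathbf K-\mathbf I)\mathbf Q$. Then $$\frac{d}{dt}G_\phi(\mathbf Q|\boldsymbol\pi)=-\frac12\sum_{i,j=0}^{N-k}K_{ij}\,\beta(Q_i,Q_j)\big(\phi'(Q_j)-\phi'(Q_i)\big)\big(\log Q_j-\log Q_i\big)\pi_i\le0.$$ Moreover, if $\phi$ is locally strongly convex in the sense that for every $M>0$ there is $c_M>0$ with $\phi''(x)\ge c_M$ for $x\in[0,M]$, then there exists $C>0$ depending only on $\phi$ and $\boldsymbol\pi$ such that $$\frac{d}{dt}G_\phi(\mathbf Q|\boldsymbol\pi)\le-C\Big|\frac{d\mathbf Q}{dt}\Big|_{\boldsymbol\pi}^2\le0,\qquad |\mathbf a|_{\boldsymbol\pi}^2:=\sum_ia_i^2\pi_i.$$ Furthermore, if $\phi(x)\ge x-1$ for all $x\ge0$, then $G_\phi(\mathbf Q|\boldsymbol\pi)\ge0$.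
   Context: Column-stochastic matrices; $\dagger$ transpose, $\circ$ entrywise product. For $1\le k<N-1$, an $(N+1)\times(N+1)$ column-stochastic $\mathbf M$ is $(N+1,k)$-admissible if, after a simultaneous permutation of rows and columns, $\mathbf M=\begin{pmatrix}\widetilde{\mathbf M}&\mathbf 0\\ \mathbf A&\mathbf I\end{pmatrix}$ with $\mathbf I$ the $k\times k$ identity, $\widetilde{\mathbf M}$ irreducible of size $N+1-k$ (the core) and $\mathbf A$ with no zero row. Its characteristic triple $(\mu,\widetilde{\mathbf w},\widetilde{\mathbf z})$: $\mu=\rho(\widetilde{\mathbf M})\in(0,1)$ and $\widetilde{\mathbf w},\widetilde{\mathbf z}$ the positive left/right eigenvectors for $\mu$, normalised by $\langle\widetilde{\mathbf w},\mathbf 1\rangle=\langle\widetilde{\mathbf w},\widetilde{\mathbf z}\rangle=1$. $\mathbf M$ is micro-reversible if $\widetilde w_i\widetilde M_{ij}\widetilde z_j=\widetilde w_j\widetilde M_{ji}\widetilde z_i$ for all $i,j$. The $Q$-process kernel is $\mathbf K=\frac1\mu\operatorname{diag}(\widetilde{\mathbf w})^{-1}\widetilde{\mathbf M}^\dagger\operatorname{diag}(\widetilde{\mathbf w})$, which is irreducible, row-stochastic, with stationary distribution $\boldsymbol\pi=\widetilde{\mathbf w}\circ\widetilde{\mathbf z}$ and $\pi_iK_{ij}=\pi_jK_{ji}$. $\beta$ is the logarithmic mean: $\beta(x,y)=\frac{x-y}{\log x-\log y}$ for $x\ne y$, $\beta(x,x)=x$ (so $\beta(Q_i,Q_j)(\log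 Q_j-\log Q_i)=Q_j-Q_i$). *)

theory Defs
  imports "HOL-Analysis.Analysis"
begin

text \<open>Matrices are functions nat => nat => real, with indices in {0..<m}
  (an m x m matrix). Vectors are functions nat => real.\<close>

definition col_stochastic :: "nat \<Rightarrow> (nat \<Rightarrow> nat \<Rightarrow> real) \<Rightarrow> bool" where
  "col_stochastic m A \<longleftrightarrow> (\<forall>i<m. \<forall>j<m. 0 \<le> A i j) \<and> (\<forall>j<m. (\<Sum>i<m. A i j) = 1)"

fun mat_pow :: "nat \<Rightarrow> (nat \<Rightarrow> nat \<Rightarrow> real) \<Rightarrow> nat \<Rightarrow> nat \<Rightarrow> nat \<Rightarrow> real" where
  "mat_pow m A 0 = (\<lambda>i j. if i = j then 1 else 0)"
| "mat_pow m A (Suc p) = (\<lambda>i j. \<Sum>l<m. mat_pow m A p i l * A l j)"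

definition irreducible_mat :: "nat \<Rightarrow> (nat \<Rightarrow> nat \<Rightarrow> real) \<Rightarrow> bool" where
  "irreducible_mat m A \<longleftrightarrow> (\<forall>i<m. \<forall>j<m. \<exists>p>0. mat_pow m A p i j > 0)"

definition spec_rad :: "nat \<Rightarrow> (nat \<Rightarrow> nat \<Rightarrow> real) \<Rightarrow> real" where
  "spec_rad m A = Max {cmod lam | lam. \<exists>v :: nat \<Rightarrow> complex. (\<exists>i<m. v i \<noteq> 0) \<and>
      (\<forall>i<m. (\<Sum>j<m. complex_of_real (A i j) * v j) = lam * v i)}"

text \<open>(N+1,k)-admissibility of M, witnessed by the simultaneous permutation sigma of {0..N}:
  (M (sigma i) (sigma j)) has the block form [[Mt,0],[A,I]] with core Mt of size N+1-k.\<close>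
definition admissible_perm :: "nat \<Rightarrow> nat \<Rightarrow> (nat \<Rightarrow> nat \<Rightarrow> real) \<Rightarrow> (nat \<Rightarrow> nat) \<Rightarrow> bool" where
  "admissible_perm N k M \<sigma> \<longleftrightarrow>
     1 \<le> k \<and> k + 1 < N \<and> col_stochastic (N+1) M \<and> bij_betw \<sigma> {..N} {..N} \<and>
     (\<forall>i\<le>N. \<forall>j. N + 1 - k \<le> j \<and> j \<le> N \<longrightarrow> M (\<sigma> i) (\<sigma> j) = (if i = j then 1 else 0)) \<and>
     (\<forall>i. N + 1 - k \<le> i \<and> i \<le> N \<longrightarrow> (\<exists>j < N + 1 - k. M (\<sigma> i) (\<sigma> j) \<noteq> 0)) \<and>
     irreducible_mat (N + 1 - k) (\<lambda>i j. M (\<sigma> i) (\<sigma> j))"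

definition core :: "(nat \<Rightarrow> nat \<Rightarrow> real) \<Rightarrow> (nat \<Rightarrow> nat) \<Rightarrow> nat \<Rightarrow> nat \<Rightarrow> real" where
  "core M \<sigma> = (\<lambda>i j. M (\<sigma> i) (\<sigma> j))"

definition char_triple :: "nat \<Rightarrow> (nat \<Rightarrow> nat \<Rightarrow> real) \<Rightarrow> real \<Rightarrow> (nat \<Rightarrow> real) \<Rightarrow> (nat \<Rightarrow> real) \<Rightarrow> bool" where
  "char_triple m Mt \<mu> w z \<longleftrightarrow>
     \<mu> = spec_rad m Mt \<and> (\<forall>i<m. 0 < w i \<and> 0 < z i) \<and>
     (\<forall>j<m. (\<Sum>i<m. w i * Mt i j) = \<mu> * w j) \<and>
     (\<forall>i<m. (\<Sum>j<m. Mt i j * z j) = \<mu> * z i) \<and>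
     (\<Sum>i<m. w i) = 1 \<and> (\<Sum>i<m. w i * z i) = 1"

definition micro_reversible :: "nat \<Rightarrow> (nat \<Rightarrow> nat \<Rightarrow> real) \<Rightarrow> (nat \<Rightarrow> real) \<Rightarrow> (nat \<Rightarrow> real) \<Rightarrow> bool" where
  "micro_reversible m Mt w z \<longleftrightarrow> (\<forall>i<m. \<forall>j<m. w i * Mt i j * z j = w j * Mt j i * z i)"

definition Qkernel :: "(nat \<Rightarrow> nat \<Rightarrow> real) \<Rightarrow> real \<Rightarrow> (nat \<Rightarrow> real) \<Rightarrow> nat \<Rightarrow> nat \<Rightarrow> real" where
  "Qkernel Mt \<mu> w = (\<lambda>i j. Mt j i * w j / (\<mu> * w i))"

definition statdist :: "(nat \<Rightarrow> real) \<Rightarrow> (nat \<Rightarrow> real) \<Rightarrow> nat \<Rightarrow> real" where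
  "statdist w z = (\<lambda>i. w i * z i)"

definition logmean :: "real \<Rightarrow> real \<Rightarrow> real" where
  "logmean x y = (if x = y then x else (x - y) / (ln x - ln y))"

definition G_phi :: "(real \<Rightarrow> real) \<Rightarrow> nat \<Rightarrow> (nat \<Rightarrow> real) \<Rightarrow> (nat \<Rightarrow> real) \<Rightarrow> real" where
  "G_phi \<phi> m \<pi> Q = (\<Sum>i<m. \<phi> (Q i) * \<pi> i)"

definition is_Qsol :: "nat \<Rightarrow> (nat \<Rightarrow> nat \<Rightarrow> real) \<Rightarrow> (nat \<Rightarrow> real) \<Rightarrow> (real \<Rightarrow> nat \<Rightarrow> real) \<Rightarrow> bool" where
  "is_Qsol m K \<pi> Q \<longleftrightarrow>
     (\<forall>t\<ge>0. \<forall>i<m. ((\<lambda>s. Q s i) has_real_derivative ((\<Sum>j<m. K i j * Q t j) - Q t i)) (at t within {0..})) \<and>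
     (\<forall>t\<ge>0. (\<forall>i<m. 0 \<le> Q t i * \<pi> i) \<and> (\<Sum>i<m. Q t i * \<pi> i) = 1)"

definition dissip :: "(real \<Rightarrow> real) \<Rightarrow> nat \<Rightarrow> (nat \<Rightarrow> nat \<Rightarrow> real) \<Rightarrow> (nat \<Rightarrow> real) \<Rightarrow> (nat \<Rightarrow> real) \<Rightarrow> real" where
  "dissip \<phi> m K \<pi> Q = - (1/2) * (\<Sum>i<m. \<Sum>j<m. K i j * logmean (Q i) (Q j) *
       (deriv \<phi> (Q j) - deriv \<phi> (Q i)) * (ln (Q j) - ln (Q i)) * \<pi> i)"

end

theory Submission
  imports Defs
begin


lemma Qsol_deriv_at:
  assumes sol: "is_Qsol m K \<pi> Q" and t: "t > 0" and i: "i < m"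
  shows "((\<lambda>s. Q s i) has_real_derivative ((\<Sum>j<m. K i j * Q t j) - Q t i)) (at t)"
proof -
  have "((\<lambda>s. Q s i) has_real_derivative ((\<Sum>j<m. K i j * Q t j) - Q t i)) (at t within {0..})"
    using sol t i unfolding is_Qsol_def by (meson less_imp_le)
  then have "((\<lambda>s. Q s i) has_real_derivative ((\<Sum>j<m. K i j * Q t j) - Q t i)) (at t within {0<..})"
    by (rule has_field_derivative_subset) auto
  then show ?thesis using t at_within_open[of t "{0<..}"] by simp
qed

lemma Qsol_nonneg:
  assumes sol: "is_Qsol m K \<pi> Q" and t: "t \<ge> 0" and i: "i < m" and pipos: "\<forall>i<m. 0 < \<pi> i"
  shows "0 \<le> Q t i"
proof -
  have "0 \<le> Q t i * \<pi> i" using sol t i unfolding is_Qsol_def by blast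
  moreover have "\<pi> i > 0" using pipos i by auto
  ultimately show ?thesis by (simp add: zero_le_mult_iff)
qed

lemma Qsol_pos:
  assumes sol: "is_Qsol m K \<pi> Q" and Kpos: "\<forall>i<m. \<forall>j<m. 0 \<le> K i j"
    and pipos: "\<forall>i<m. 0 < \<pi> i"
    and irr: "\<forall>a<m. \<forall>b<m. \<exists>p. mat_pow m A p a b \<noteq> 0"
    and edge: "\<forall>a<m. \<forall>b<m. A a b \<noteq> 0 \<longrightarrow> K b a \<noteq> 0"
    and t: "t > 0" and i: "i < m"
  shows "Q t i > 0"
proof (rule ccontr)
  assume "\<not> Q t i > 0"
  moreover have "0 \<le> Q t i" using Qsol_nonneg[OF sol _ i pipos] t by simp
  ultimately have Qt0: "Q t i = 0" by linarith
  define D where "D = (\<lambda>s j. (\<Sum>l<m. K j l * Q s l) - Q s j)"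
  have der: "((\<lambda>s. Q s j) has_real_derivative D s j) (at s)" if "s > 0" "j < m" for s j
    using Qsol_deriv_at[OF sol that] unfolding D_def .
  have step1: "Q s i = 0" if s: "0 < s" "s < t" for s
  proof -
    let ?f = "\<lambda>x. exp x * Q x i"
    have fd: "(?f has_real_derivative (exp x * Q x i + D x i * exp x)) (at x)" if "x > 0" for x
      by (rule DERIV_mult[OF DERIV_exp der[OF that i]])
    have "?f s \<le> ?f t"
    proof (rule DERIV_nonneg_imp_increasing_open[where f="\<lambda>x. exp x * Q x i" and a=s and b=t])
      show "s \<le> t" using s by simp
      show "\<exists>y. (?f has_real_derivative y) (at x) \<and> 0 \<le> y" if "s < x" "x < t" for x
      proof (intro exI conjI)
        have x0: "0 < x" using that s by linarith
        show "(?f has_real_derivative (exp x * Q x i + D x i * exp x)) (at x)" by (rule fd[OF x0])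
        have "0 \<le> K i l * Q x l" if l: "l < m" for l
          using Kpos i l Qsol_nonneg[OF sol less_imp_le[OF x0] l pipos] by simp
        then have "0 \<le> (\<Sum>l<m. K i l * Q x l)"
          by (intro sum_nonneg) simp
        then show "0 \<le> exp x * Q x i + D x i * exp x" unfolding D_def
          by (simp add: algebra_simps)
      qed
      show "continuous_on {s..t} ?f"
      proof (intro continuous_at_imp_continuous_on ballI)
        fix x assume "x \<in> {s..t}"
        then have "x > 0" using s by auto
        then show "isCont ?f x" using fd[of x] DERIV_isCont by blast
      qed
    qed
    then have "exp s * Q s i \<le> 0" using Qt0 by simp
    then have "Q s i \<le> 0" by (simp add: mult_le_0_iff)
    moreover have "0 \<le> Q s i" using Qsol_nonneg[OF sol _ i pipos] s by simp
    ultimately show ?thesis by simp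
  qed
  define Z where "Z = {j. j < m \<and> (\<forall>s\<in>{0<..<t}. Q s j = 0)}"
  have iZ: "i \<in> Z" using step1 i unfolding Z_def by auto
  have clos: "l \<in> Z" if j: "j \<in> Z" and l: "l < m" and Kjl: "K j l \<noteq> 0" for j l
  proof -
    have "Q s l = 0" if s: "0 < s" "s < t" for s
    proof -
      have jm: "j < m" and zj: "\<forall>s\<in>{0<..<t}. Q s j = 0" using j unfolding Z_def by auto
      have "((\<lambda>s. 0::real) has_real_derivative D s j) (at s)"
        by (rule has_field_derivative_transform_within_open[OF der[OF s(1) jm], of "{0<..<t}"])
           (use s zj in auto)
      from DERIV_unique[OF this DERIV_const] have "D s j = 0" .
      then have sum0: "(\<Sum>l<m. K j l * Q s l) = 0" using zj s unfolding D_def by auto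
      have nn: "\<forall>l\<in>{..<m}. 0 \<le> K j l * Q s l"
        using Kpos Qsol_nonneg[OF sol, of s] pipos jm s by (auto intro!: mult_nonneg_nonneg)
      have "K j l * Q s l = 0" using sum_nonneg_eq_0_iff[of "{..<m}" "\<lambda>l. K j l * Q s l"] sum0 nn l
        by auto
      then show ?thesis using Kjl by simp
    qed
    then show ?thesis using l unfolding Z_def by auto
  qed
  have pw: "\<forall>a b. a < m \<longrightarrow> b < m \<longrightarrow> mat_pow m A p a b \<noteq> 0 \<longrightarrow> b \<in> Z \<longrightarrow> a \<in> Z" for p
  proof (induction p)
    case 0
    show ?case
    proof (intro allI impI)
      fix a b assume "a < m" "b < m" "mat_pow m A 0 a b \<noteq> 0" "b \<in> Z"
      then show "a \<in> Z" by (cases "a = b") auto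
    qed
  next
    case (Suc p)
    show ?case
    proof (intro allI impI)
      fix a b assume a: "a < m" and b: "b < m" and ne: "mat_pow m A (Suc p) a b \<noteq> 0" and bZ: "b \<in> Z"
      have "mat_pow m A (Suc p) a b = (\<Sum>l<m. mat_pow m A p a l * A l b)" by (rule fun_cong[OF fun_cong[OF mat_pow.simps(2)]])
      with ne have "(\<Sum>l<m. mat_pow m A p a l * A l b) \<noteq> 0" by argo
      then obtain l where l: "l \<in> {..<m}" "mat_pow m A p a l * A l b \<noteq> 0"
        by (rule sum.not_neutral_contains_not_neutral)
      then have lm: "l < m" and A1: "A l b \<noteq> 0" and A2: "mat_pow m A p a l \<noteq> 0" by auto
      have "K b l \<noteq> 0" using edge lm b A1 by blast
      then have "l \<in> Z" using clos[OF bZ lm] by blast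
      then show "a \<in> Z" using Suc.IH a lm A2 by blast
    qed
  qed
  have allZ: "a \<in> Z" if a: "a < m" for a
  proof -
    obtain p where "mat_pow m A p a i \<noteq> 0" using irr a i by blast
    then show ?thesis using pw[of p] a i iZ by blast
  qed
  have "t/2 \<ge> 0" using t by simp
  then have "(\<Sum>j<m. Q (t/2) j * \<pi> j) = 1" using sol unfolding is_Qsol_def by blast
  moreover have "(\<Sum>j<m. Q (t/2) j * \<pi> j) = 0"
    using allZ t unfolding Z_def by (intro sum.neutral) auto
  ultimately show False by simp
qed




lemma logmean_mul:
  assumes "x > 0" "y > 0"
  shows "logmean x y * (ln y - ln x) = y - x"
proof (cases "x = y")
  case True then show ?thesis by (simp add: logmean_def)
next
  case False
  then have "ln x \<noteq> ln y" using assms by simp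
  then have "ln x - ln y \<noteq> 0" by simp
  then show ?thesis using False unfolding logmean_def by (simp add: field_simps)
qed

lemma dissip_alt:
  assumes Qpos: "\<forall>i<m. Q i > 0"
  shows "dissip \<phi> m K \<pi> Q = -(1/2) * (\<Sum>i<m. \<Sum>j<m. \<pi> i * K i j * ((deriv \<phi> (Q j) - deriv \<phi> (Q i)) * (Q j - Q i)))"
  unfolding dissip_def
proof -
  have "K i j * logmean (Q i) (Q j) * (deriv \<phi> (Q j) - deriv \<phi> (Q i)) * (ln (Q j) - ln (Q i)) * \<pi> i
      = \<pi> i * K i j * ((deriv \<phi> (Q j) - deriv \<phi> (Q i)) * (Q j - Q i))" if "i < m" "j < m" for i j
  proof -
    have "K i j * logmean (Q i) (Q j) * (deriv \<phi> (Q j) - deriv \<phi> (Q i)) * (ln (Q j) - ln (Q i)) * \<pi> i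
      = \<pi> i * K i j * ((deriv \<phi> (Q j) - deriv \<phi> (Q i)) * (logmean (Q i) (Q j) * (ln (Q j) - ln (Q i))))"
      by (simp only: mult_ac)
    also have "\<dots> = \<pi> i * K i j * ((deriv \<phi> (Q j) - deriv \<phi> (Q i)) * (Q j - Q i))"
      using logmean_mul[of "Q i" "Q j"] Qpos that by simp
    finally show ?thesis .
  qed
  then show "- (1 / 2) * (\<Sum>i<m. \<Sum>j<m. K i j * logmean (Q i) (Q j) * (deriv \<phi> (Q j) - deriv \<phi> (Q i)) *
                (ln (Q j) - ln (Q i)) * \<pi> i) =
    - (1 / 2) * (\<Sum>i<m. \<Sum>j<m. \<pi> i * K i j * ((deriv \<phi> (Q j) - deriv \<phi> (Q i)) * (Q j - Q i)))"
    by (intro arg_cong[where f="\<lambda>x. - (1/2) * x"] sum.cong refl) auto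
qed

lemma grad_sym:
  fixes d Q \<pi> :: "nat \<Rightarrow> real" and K :: "nat \<Rightarrow> nat \<Rightarrow> real"
  assumes Krow: "\<forall>i<m. (\<Sum>j<m. K i j) = 1"
    and db: "\<forall>i<m. \<forall>j<m. \<pi> i * K i j = \<pi> j * K j i"
  shows "(\<Sum>i<m. d i * ((\<Sum>j<m. K i j * Q j) - Q i) * \<pi> i)
       = -(1/2) * (\<Sum>i<m. \<Sum>j<m. \<pi> i * K i j * ((d j - d i) * (Q j - Q i)))"
proof -
  define T where "T = (\<Sum>i<m. \<Sum>j<m. \<pi> i * K i j * (d i * (Q j - Q i)))"
  have "(\<Sum>i<m. d i * ((\<Sum>j<m. K i j * Q j) - Q i) * \<pi> i) = T"
    unfolding T_def
  proof (rule sum.cong[OF refl])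
    fix i assume "i \<in> {..<m}"
    then have "(\<Sum>j<m. K i j) = 1" using Krow by auto
    then have "(\<Sum>j<m. K i j * Q j) - Q i = (\<Sum>j<m. K i j * Q j) - (\<Sum>j<m. K i j) * Q i" by simp
    also have "\<dots> = (\<Sum>j<m. K i j * (Q j - Q i))"
      by (simp add: sum_distrib_right sum_subtractf right_diff_distrib)
    finally have "d i * ((\<Sum>j<m. K i j * Q j) - Q i) * \<pi> i = d i * (\<Sum>j<m. K i j * (Q j - Q i)) * \<pi> i"
      by simp
    also have "\<dots> = (\<Sum>j<m. \<pi> i * K i j * (d i * (Q j - Q i)))"
      by (simp add: sum_distrib_left sum_distrib_right mult_ac)
    finally show "d i * ((\<Sum>j<m. K i j * Q j) - Q i) * \<pi> i = (\<Sum>j<m. \<pi> i * K i j * (d i * (Q j - Q i)))" .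
  qed
  moreover have T2: "T = (\<Sum>i<m. \<Sum>j<m. \<pi> i * K i j * (d j * (Q i - Q j)))"
  proof -
    have "T = (\<Sum>j<m. \<Sum>i<m. \<pi> i * K i j * (d i * (Q j - Q i)))"
      unfolding T_def by (rule sum.swap)
    also have "\<dots> = (\<Sum>j<m. \<Sum>i<m. \<pi> j * K j i * (d i * (Q j - Q i)))"
      using db by (intro sum.cong refl) auto
    finally show ?thesis by simp
  qed
  moreover have "T + T = - (\<Sum>i<m. \<Sum>j<m. \<pi> i * K i j * ((d j - d i) * (Q j - Q i)))"
    apply (subst T2)
    unfolding T_def
    by (simp add: sum.distrib[symmetric] sum_negf[symmetric] algebra_simps)
  ultimately show ?thesis by simp
qed

lemma convex_deriv_mono:
  fixes \<phi> :: "real \<Rightarrow> real"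
  assumes conv: "convex_on {0..} \<phi>" and diff: "\<forall>x>0. \<phi> differentiable (at x)"
    and x: "x > 0" and y: "y > 0"
  shows "0 \<le> (deriv \<phi> y - deriv \<phi> x) * (y - x)"
proof -
  have dx: "(\<phi> has_field_derivative deriv \<phi> x) (at x within {0..})"
    using diff x DERIV_deriv_iff_real_differentiable has_field_derivative_at_within by blast
  have dy: "(\<phi> has_field_derivative deriv \<phi> y) (at y within {0..})"
    using diff y DERIV_deriv_iff_real_differentiable has_field_derivative_at_within by blast
  have con: "connected {0::real..}" by (simp add: is_interval_connected)
  have "\<phi> y - \<phi> x \<ge> deriv \<phi> x * (y - x)"
    by (rule convex_on_imp_above_tangent[OF conv con _ _ dx]) (use x y in auto)
  moreover have "\<phi> x - \<phi> y \<ge> deriv \<phi> y * (x - y)"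
    by (rule convex_on_imp_above_tangent[OF conv con _ _ dy]) (use x y in auto)
  ultimately show ?thesis by (simp add: algebra_simps)
qed

lemma strong_deriv_mono:
  fixes \<phi> \<phi>2 :: "real \<Rightarrow> real"
  assumes d2: "\<forall>x>0. (deriv \<phi> has_real_derivative \<phi>2 x) (at x)"
    and cB: "\<forall>x\<in>{0<..B}. c \<le> \<phi>2 x"
    and x: "0 < x" "x \<le> B" and y: "0 < y" "y \<le> B"
  shows "c * (y - x)^2 \<le> (deriv \<phi> y - deriv \<phi> x) * (y - x)"
proof -
  have key: "c * (b - a)^2 \<le> (deriv \<phi> b - deriv \<phi> a) * (b - a)"
    if ab: "a < b" "0 < a" "b \<le> B" for a b
  proof -
    have "\<And>u. a \<le> u \<Longrightarrow> u \<le> b \<Longrightarrow> (deriv \<phi> has_real_derivative \<phi>2 u) (at u)"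
      using d2 ab by auto
    from MVT2[OF ab(1) this] obtain z where z: "a < z" "z < b" "deriv \<phi> b - deriv \<phi> a = (b - a) * \<phi>2 z"
      by blast
    have "c \<le> \<phi>2 z" using cB z ab by auto
    then have "c * (b - a)^2 \<le> \<phi>2 z * (b - a)^2" by (rule mult_right_mono) simp
    also have "\<dots> = (deriv \<phi> b - deriv \<phi> a) * (b - a)" using z(3) by (simp add: power2_eq_square)
    finally show ?thesis .
  qed
  show ?thesis
  proof (cases x y rule: linorder_cases)
    case less then show ?thesis using key[of x y] x y by simp
  next
    case equal then show ?thesis by simp
  next
    case greater
    then have "c * (x - y)^2 \<le> (deriv \<phi> x - deriv \<phi> y) * (x - y)" using key[of y x] x y by simp
    then show ?thesis by (simp add: power2_commute algebra_simps)
  qed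
qed

lemma jensen_sq:
  fixes p x :: "nat \<Rightarrow> real"
  assumes "\<forall>j<m. 0 \<le> p j" and "(\<Sum>j<m. p j) = 1"
  shows "(\<Sum>j<m. p j * x j)^2 \<le> (\<Sum>j<m. p j * (x j)^2)"
proof -
  define s where "s = (\<Sum>j<m. p j * x j)"
  have "0 \<le> (\<Sum>j<m. p j * (x j - s)^2)" using assms(1) by (intro sum_nonneg) auto
  also have "(\<Sum>j<m. p j * (x j - s)^2) = (\<Sum>j<m. p j * (x j)^2) - 2 * s * (\<Sum>j<m. p j * x j) + s^2 * (\<Sum>j<m. p j)"
    by (simp add: power2_diff sum.distrib sum_subtractf sum_distrib_left sum_distrib_right algebra_simps)
  finally show ?thesis using assms(2) unfolding s_def by (simp add: power2_eq_square)
qed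


theorem lemma5:
  fixes N k :: nat and M :: "nat \<Rightarrow> nat \<Rightarrow> real" and \<sigma> :: "nat \<Rightarrow> nat"
    and \<mu> :: real and w z :: "nat \<Rightarrow> real"
    and \<phi> \<phi>2 :: "real \<Rightarrow> real"
  assumes adm: "admissible_perm N k M \<sigma>"
    and triple: "char_triple (N + 1 - k) (core M \<sigma>) \<mu> w z"
    and mrev: "micro_reversible (N + 1 - k) (core M \<sigma>) w z"
    and conv: "convex_on {0..} \<phi>"
    and diff: "\<forall>x>0. \<phi> differentiable (at x)"
  shows
   "(\<forall>Q. is_Qsol (N + 1 - k) (Qkernel (core M \<sigma>) \<mu> w) (statdist w z) Q \<longrightarrow>
      (\<forall>t>0. ((\<lambda>s. G_phi \<phi> (N + 1 - k) (statdist w z) (Q s)) has_real_derivative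
                 dissip \<phi> (N + 1 - k) (Qkernel (core M \<sigma>) \<mu> w) (statdist w z) (Q t)) (at t)
             \<and> dissip \<phi> (N + 1 - k) (Qkernel (core M \<sigma>) \<mu> w) (statdist w z) (Q t) \<le> 0))
    \<and>
    ((\<forall>x>0. (deriv \<phi> has_real_derivative \<phi>2 x) (at x)) \<and>
     (\<forall>B>0. \<exists>c>0. \<forall>x\<in>{0<..B}. c \<le> \<phi>2 x) \<longrightarrow>
     (\<exists>C>0. \<forall>Q. is_Qsol (N + 1 - k) (Qkernel (core M \<sigma>) \<mu> w) (statdist w z) Q \<longrightarrow>
        (\<forall>t>0. dissip \<phi> (N + 1 - k) (Qkernel (core M \<sigma>) \<mu> w) (statdist w z) (Q t)
               \<le> - C * (\<Sum>i<N + 1 - k. ((\<Sum>j<N + 1 - k. Qkernel (core M \<sigma>) \<mu> w i j * Q t j) - Q t i)\<^sup>2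
                                        * statdist w z i)
             \<and> - C * (\<Sum>i<N + 1 - k. ((\<Sum>j<N + 1 - k. Qkernel (core M \<sigma>) \<mu> w i j * Q t j) - Q t i)\<^sup>2
                                        * statdist w z i) \<le> 0)))
    \<and>
    ((\<forall>x\<ge>0. x - 1 \<le> \<phi> x) \<longrightarrow>
     (\<forall>Q. is_Qsol (N + 1 - k) (Qkernel (core M \<sigma>) \<mu> w) (statdist w z) Q \<longrightarrow>
        (\<forall>t\<ge>0. 0 \<le> G_phi \<phi> (N + 1 - k) (statdist w z) (Q t))))"
proof -
  define m where "m = N + 1 - k"
  define Mt where "Mt = core M \<sigma>"
  define K where "K = Qkernel Mt \<mu> w"
  define \<pi> where "\<pi> = statdist w z"
  have admU: "1 \<le> k" "k + 1 < N" "col_stochastic (N+1) M" "bij_betw \<sigma> {..N} {..N}"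
    "irreducible_mat (N + 1 - k) (\<lambda>i j. M (\<sigma> i) (\<sigma> j))"
    using adm unfolding admissible_perm_def by blast+
  have m1: "0 < m" using admU(2) unfolding m_def by linarith
  have mN: "m \<le> N + 1" unfolding m_def by linarith
  have Mtnn: "0 \<le> Mt i j" if "i < m" "j < m" for i j
  proof -
    have "\<sigma> i \<in> {..N}" "\<sigma> j \<in> {..N}"
      using bij_betw_apply[OF admU(4)] that mN by auto
    then have "\<sigma> i < N + 1" "\<sigma> j < N + 1" by auto
    then show ?thesis using admU(3) unfolding col_stochastic_def Mt_def core_def by blast
  qed
  have irrM: "irreducible_mat m Mt" using admU(5) unfolding m_def Mt_def core_def .
  have tr: "\<forall>i<m. 0 < w i \<and> 0 < z i" "\<forall>j<m. (\<Sum>i<m. w i * Mt i j) = \<mu> * w j"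
     "\<forall>i<m. (\<Sum>j<m. Mt i j * z j) = \<mu> * z i" "(\<Sum>i<m. w i * z i) = 1"
    using triple unfolding char_triple_def m_def Mt_def by blast+
  have wpos: "0 < w i" and zpos: "0 < z i" if "i < m" for i using tr(1) that by auto
  have mu: "\<mu> > 0"
  proof (rule ccontr)
    assume "\<not> \<mu> > 0"
    then have mle: "\<mu> \<le> 0" by simp
    have Mt0: "Mt i j = 0" if ij: "i < m" "j < m" for i j
    proof -
      have "(\<Sum>i<m. w i * Mt i j) \<le> 0"
        using tr(2) ij mle wpos[OF ij(2)] by (simp add: mult_nonpos_nonneg)
      moreover have nn: "\<forall>l\<in>{..<m}. 0 \<le> w l * Mt l j"
        using wpos Mtnn ij by (simp add: less_imp_le)
      moreover have "0 \<le> (\<Sum>i<m. w i * Mt i j)" using nn by (intro sum_nonneg) blast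
      ultimately have "(\<Sum>i<m. w i * Mt i j) = 0" by linarith
      then have "w i * Mt i j = 0" using sum_nonneg_eq_0_iff[of "{..<m}" "\<lambda>l. w l * Mt l j"] nn ij by auto
      then show ?thesis using wpos[OF ij(1)] by simp
    qed
    obtain p where p: "p > 0" "mat_pow m Mt p 0 0 > 0" using irrM m1 unfolding irreducible_mat_def by blast
    then obtain q where q: "p = Suc q" using gr0_implies_Suc by blast
    have "mat_pow m Mt (Suc q) 0 0 = (\<Sum>l<m. mat_pow m Mt q 0 l * Mt l 0)"
      by (rule fun_cong[OF fun_cong[OF mat_pow.simps(2)]])
    also have "\<dots> = 0" using Mt0 m1 by (intro sum.neutral) auto
    finally show False using p q by simp
  qed
  have Kdef: "K i j = Mt j i * w j / (\<mu> * w i)" for i j unfolding K_def Qkernel_def by simp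
  have pidef: "\<pi> i = w i * z i" for i unfolding \<pi>_def statdist_def by simp
  have Knn: "\<forall>i<m. \<forall>j<m. 0 \<le> K i j"
    using Mtnn wpos mu unfolding Kdef by (auto intro!: divide_nonneg_pos mult_nonneg_nonneg simp: less_imp_le)
  have pipos: "\<forall>i<m. 0 < \<pi> i" using wpos zpos unfolding pidef by simp
  have pisum: "(\<Sum>i<m. \<pi> i) = 1" using tr(4) unfolding pidef .
  have Krow: "\<forall>i<m. (\<Sum>j<m. K i j) = 1"
  proof (intro allI impI)
    fix i assume i: "i < m"
    have "(\<Sum>j<m. K i j) = (\<Sum>j<m. w j * Mt j i) / (\<mu> * w i)"
      unfolding Kdef by (simp add: sum_divide_distrib mult_ac)
    also have "\<dots> = 1" using tr(2) i mu wpos[OF i] by simp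
    finally show "(\<Sum>j<m. K i j) = 1" .
  qed
  have db: "\<forall>i<m. \<forall>j<m. \<pi> i * K i j = \<pi> j * K j i"
  proof (intro allI impI)
    fix i j assume ij: "i < m" "j < m"
    have mr: "w i * Mt i j * z j = w j * Mt j i * z i"
      using mrev ij unfolding micro_reversible_def m_def Mt_def by blast
    have "\<pi> i * K i j = z i * Mt j i * w j / \<mu>"
      unfolding pidef Kdef using wpos[OF ij(1)] mu by (simp add: field_simps)
    also have "\<dots> = z j * Mt i j * w i / \<mu>" using mr by (simp add: mult_ac)
    also have "\<dots> = \<pi> j * K j i"
      unfolding pidef Kdef using wpos[OF ij(2)] mu by (simp add: field_simps)
    finally show "\<pi> i * K i j = \<pi> j * K j i" .
  qed
  have irr': "\<forall>a<m. \<forall>b<m. \<exists>p. mat_pow m Mt p a b \<noteq> 0"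
  proof (intro allI impI)
    fix a b assume "a < m" "b < m"
    then obtain p where "p > 0" "mat_pow m Mt p a b > 0" using irrM unfolding irreducible_mat_def by blast
    then show "\<exists>p. mat_pow m Mt p a b \<noteq> 0" by (intro exI[of _ p]) simp
  qed
  have edge: "\<forall>a<m. \<forall>b<m. Mt a b \<noteq> 0 \<longrightarrow> K b a \<noteq> 0"
  proof (intro allI impI)
    fix a b assume ab: "a < m" "b < m" and "Mt a b \<noteq> 0"
    moreover have "w a \<noteq> 0" "w b \<noteq> 0" using wpos ab by (metis less_irrefl)+
    ultimately show "K b a \<noteq> 0" unfolding Kdef using mu by simp
  qed
  have Qpos: "0 < Q t i" if "is_Qsol m K \<pi> Q" "t > 0" "i < m" for Q t i
    by (rule Qsol_pos[OF that(1) Knn pipos irr' edge that(2,3)])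
  have dissip_nonneg_form: "dissip \<phi> m K \<pi> (Q t) = -(1/2) * (\<Sum>i<m. \<Sum>j<m. \<pi> i * K i j * ((deriv \<phi> (Q t j) - deriv \<phi> (Q t i)) * (Q t j - Q t i)))"
    if "is_Qsol m K \<pi> Q" "t > 0" for Q t
    by (rule dissip_alt) (use Qpos that in blast)
  have P1: "\<forall>Q. is_Qsol m K \<pi> Q \<longrightarrow>
      (\<forall>t>0. ((\<lambda>s. G_phi \<phi> m \<pi> (Q s)) has_real_derivative dissip \<phi> m K \<pi> (Q t)) (at t)
             \<and> dissip \<phi> m K \<pi> (Q t) \<le> 0)"
  proof (intro allI impI conjI)
    fix Q t assume sol: "is_Qsol m K \<pi> Q" and t: "(t::real) > 0"
    have eq: "(\<Sum>i<m. deriv \<phi> (Q t i) * ((\<Sum>j<m. K i j * Q t j) - Q t i) * \<pi> i) = dissip \<phi> m K \<pi> (Q t)"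
      unfolding dissip_nonneg_form[OF sol t] by (rule grad_sym[OF Krow db])
    have "((\<lambda>s. \<Sum>i<m. \<phi> (Q s i) * \<pi> i) has_real_derivative
        (\<Sum>i<m. deriv \<phi> (Q t i) * ((\<Sum>j<m. K i j * Q t j) - Q t i) * \<pi> i)) (at t)"
    proof (rule DERIV_sum)
      fix i assume "i \<in> {..<m}"
      then have i: "i < m" by simp
      have "\<phi> differentiable (at (Q t i))" using diff Qpos[OF sol t i] by blast
      then have d1: "(\<phi> has_real_derivative deriv \<phi> (Q t i)) (at (Q t i))"
        using DERIV_deriv_iff_real_differentiable by blast
      show "((\<lambda>s. \<phi> (Q s i) * \<pi> i) has_real_derivative
          deriv \<phi> (Q t i) * ((\<Sum>j<m. K i j * Q t j) - Q t i) * \<pi> i) (at t)"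
        by (rule DERIV_cmult_right[OF DERIV_chain2[OF d1 Qsol_deriv_at[OF sol t i]]])
    qed
    then show "((\<lambda>s. G_phi \<phi> m \<pi> (Q s)) has_real_derivative dissip \<phi> m K \<pi> (Q t)) (at t)"
      unfolding G_phi_def eq .
    have "0 \<le> (\<Sum>i<m. \<Sum>j<m. \<pi> i * K i j * ((deriv \<phi> (Q t j) - deriv \<phi> (Q t i)) * (Q t j - Q t i)))"
    proof (intro sum_nonneg)
      fix i j assume "i \<in> {..<m}" "j \<in> {..<m}"
      then have ij: "i < m" "j < m" by auto
      have "0 \<le> (deriv \<phi> (Q t j) - deriv \<phi> (Q t i)) * (Q t j - Q t i)"
        by (rule convex_deriv_mono[OF conv diff Qpos[OF sol t ij(1)] Qpos[OF sol t ij(2)]])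
      moreover have "0 \<le> \<pi> i * K i j" using pipos Knn ij by (simp add: less_imp_le)
      ultimately show "0 \<le> \<pi> i * K i j * ((deriv \<phi> (Q t j) - deriv \<phi> (Q t i)) * (Q t j - Q t i))"
        by simp
    qed
    then show "dissip \<phi> m K \<pi> (Q t) \<le> 0" unfolding dissip_nonneg_form[OF sol t] by simp
  qed
  have P2: "(\<forall>x>0. (deriv \<phi> has_real_derivative \<phi>2 x) (at x)) \<and>
     (\<forall>B>0. \<exists>c>0. \<forall>x\<in>{0<..B}. c \<le> \<phi>2 x) \<longrightarrow>
     (\<exists>C>0. \<forall>Q. is_Qsol m K \<pi> Q \<longrightarrow>
        (\<forall>t>0. dissip \<phi> m K \<pi> (Q t)
               \<le> - C * (\<Sum>i<m. ((\<Sum>j<m. K i j * Q t j) - Q t i)\<^sup>2 * \<pi> i)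
             \<and> - C * (\<Sum>i<m. ((\<Sum>j<m. K i j * Q t j) - Q t i)\<^sup>2 * \<pi> i) \<le> 0))"
  proof (intro impI)
    assume as: "(\<forall>x>0. (deriv \<phi> has_real_derivative \<phi>2 x) (at x)) \<and>
     (\<forall>B>0. \<exists>c>0. \<forall>x\<in>{0<..B}. c \<le> \<phi>2 x)"
    define B where "B = (\<Sum>i<m. 1 / \<pi> i)"
    have Bge: "1 / \<pi> i \<le> B" if "i < m" for i
      unfolding B_def using pipos that by (intro member_le_sum) (auto simp: less_imp_le)
    have Bpos: "B > 0" using Bge[OF m1] pipos m1 by (meson divide_pos_pos less_le_trans zero_less_one)
    obtain c where c: "c > 0" "\<forall>x\<in>{0<..B}. c \<le> \<phi>2 x" using as Bpos by blast
    show "\<exists>C>0. \<forall>Q. is_Qsol m K \<pi> Q \<longrightarrow>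
        (\<forall>t>0. dissip \<phi> m K \<pi> (Q t)
               \<le> - C * (\<Sum>i<m. ((\<Sum>j<m. K i j * Q t j) - Q t i)\<^sup>2 * \<pi> i)
             \<and> - C * (\<Sum>i<m. ((\<Sum>j<m. K i j * Q t j) - Q t i)\<^sup>2 * \<pi> i) \<le> 0)"
    proof (intro exI[of _ "c/2"] conjI allI impI)
      show "c / 2 > 0" using c by simp
      fix Q t assume sol: "is_Qsol m K \<pi> Q" and t: "(t::real) > 0"
      let ?V = "(\<Sum>i<m. ((\<Sum>j<m. K i j * Q t j) - Q t i)\<^sup>2 * \<pi> i)"
      have QB: "Q t i \<le> B" if i: "i < m" for i
      proof -
        have nn: "\<forall>l\<in>{..<m}. 0 \<le> Q t l * \<pi> l"
          using Qsol_nonneg[OF sol _ _ pipos] t pipos by (simp add: less_imp_le)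
        have "Q t i * \<pi> i \<le> (\<Sum>l<m. Q t l * \<pi> l)"
          by (rule member_le_sum) (use nn i in auto)
        also have "\<dots> = 1" using sol t unfolding is_Qsol_def by (meson less_imp_le)
        finally have "Q t i \<le> 1 / \<pi> i" using pipos i by (simp add: field_simps)
        then show ?thesis using Bge[OF i] by linarith
      qed
      have Vnn: "0 \<le> ?V" using pipos by (intro sum_nonneg) (simp add: less_imp_le)
      then show "- (c/2) * ?V \<le> 0" using c by simp
      define S where "S = (\<Sum>i<m. \<Sum>j<m. \<pi> i * K i j * ((deriv \<phi> (Q t j) - deriv \<phi> (Q t i)) * (Q t j - Q t i)))"
      define S2 where "S2 = (\<Sum>i<m. \<Sum>j<m. \<pi> i * K i j * (Q t j - Q t i)^2)"
      have SS2: "c * S2 \<le> S"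
        unfolding S_def S2_def sum_distrib_left
      proof (intro sum_mono)
        fix i j assume "i \<in> {..<m}" "j \<in> {..<m}"
        then have ij: "i < m" "j < m" by auto
        have "c * (Q t j - Q t i)^2 \<le> (deriv \<phi> (Q t j) - deriv \<phi> (Q t i)) * (Q t j - Q t i)"
          by (rule strong_deriv_mono[of \<phi> \<phi>2 B c]) (use as c Qpos[OF sol t] QB ij in auto)
        moreover have "0 \<le> \<pi> i * K i j" using pipos Knn ij by (simp add: less_imp_le)
        ultimately have "\<pi> i * K i j * (c * (Q t j - Q t i)^2) \<le> \<pi> i * K i j * ((deriv \<phi> (Q t j) - deriv \<phi> (Q t i)) * (Q t j - Q t i))"
          by (rule mult_left_mono)
        then show "c * (\<pi> i * K i j * (Q t j - Q t i)^2) \<le> \<pi> i * K i j * ((deriv \<phi> (Q t j) - deriv \<phi> (Q t i)) * (Q t j - Q t i))"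
          by (simp add: mult_ac)
      qed
      have VS2: "?V \<le> S2"
        unfolding S2_def
      proof (intro sum_mono)
        fix i assume "i \<in> {..<m}"
        then have i: "i < m" by simp
        have "(\<Sum>j<m. K i j * Q t j) - Q t i = (\<Sum>j<m. K i j * Q t j) - (\<Sum>j<m. K i j) * Q t i"
          using Krow i by simp
        also have "\<dots> = (\<Sum>j<m. K i j * (Q t j - Q t i))"
          by (simp add: sum_distrib_right sum_subtractf right_diff_distrib)
        finally have e: "(\<Sum>j<m. K i j * Q t j) - Q t i = (\<Sum>j<m. K i j * (Q t j - Q t i))" .
        have "((\<Sum>j<m. K i j * Q t j) - Q t i)\<^sup>2 \<le> (\<Sum>j<m. K i j * (Q t j - Q t i)^2)"
          unfolding e by (rule jensen_sq) (use Knn Krow i in auto)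
        then have "((\<Sum>j<m. K i j * Q t j) - Q t i)\<^sup>2 * \<pi> i \<le> (\<Sum>j<m. K i j * (Q t j - Q t i)^2) * \<pi> i"
          using pipos i by (simp add: mult_right_mono less_imp_le)
        also have "\<dots> = (\<Sum>j<m. \<pi> i * K i j * (Q t j - Q t i)\<^sup>2)"
          by (simp add: sum_distrib_left sum_distrib_right mult_ac)
        finally show "((\<Sum>j<m. K i j * Q t j) - Q t i)\<^sup>2 * \<pi> i \<le> (\<Sum>j<m. \<pi> i * K i j * (Q t j - Q t i)\<^sup>2)" .
      qed
      have "dissip \<phi> m K \<pi> (Q t) = -(1/2) * S" unfolding S_def by (rule dissip_nonneg_form[OF sol t])
      also have "\<dots> \<le> -(1/2) * (c * S2)" using SS2 by simp
      also have "\<dots> \<le> -(1/2) * (c * ?V)" using VS2 c by simp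
      finally show "dissip \<phi> m K \<pi> (Q t) \<le> - (c/2) * ?V" by simp
    qed
  qed
  have P3: "(\<forall>x\<ge>0. x - 1 \<le> \<phi> x) \<longrightarrow>
     (\<forall>Q. is_Qsol m K \<pi> Q \<longrightarrow> (\<forall>t\<ge>0. 0 \<le> G_phi \<phi> m \<pi> (Q t)))"
  proof (intro impI allI)
    fix Q t assume ph: "\<forall>x\<ge>0. x - 1 \<le> \<phi> x" and sol: "is_Qsol m K \<pi> Q" and t: "(t::real) \<ge> 0"
    have "(\<Sum>i<m. (Q t i - 1) * \<pi> i) \<le> (\<Sum>i<m. \<phi> (Q t i) * \<pi> i)"
    proof (intro sum_mono)
      fix i assume "i \<in> {..<m}"
      then have i: "i < m" by simp
      have "Q t i - 1 \<le> \<phi> (Q t i)" using ph Qsol_nonneg[OF sol t i pipos] by blast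
      then show "(Q t i - 1) * \<pi> i \<le> \<phi> (Q t i) * \<pi> i" using pipos i by (simp add: mult_right_mono less_imp_le)
    qed
    moreover have "(\<Sum>i<m. (Q t i - 1) * \<pi> i) = (\<Sum>i<m. Q t i * \<pi> i) - (\<Sum>i<m. \<pi> i)"
      by (simp add: left_diff_distrib sum_subtractf)
    moreover have "(\<Sum>i<m. Q t i * \<pi> i) = 1" using sol t unfolding is_Qsol_def by blast
    ultimately show "0 \<le> G_phi \<phi> m \<pi> (Q t)" unfolding G_phi_def using pisum by simp
  qed
  show ?thesis using P1 P2 P3 unfolding m_def Mt_def K_def \<pi>_def by blast
qed

end
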